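(* Let $M(A)$ be an RBK manifold with Bott matrix $A$ and $P$-matrix $P$. Suppose $k$ is an even number and there are indices $i_1<\dots<i_{2k}$ such that the columns $A^{i_1}=A^{i_2}=\dots=A^{i_{2k}}$ are equal and nonzero, while all other columns of $A$ are zero. Then $w_2(M(A))=0$, so $M(A)$ has a Spin-structure.
   Context: Real Bott manifolds: let $A=[a_{ij}]$ be an $m\times m$ strictly upper triangular matrix with entries in $\{0,1\}$. For $i=1,\dots,m-1$ let $s_i$ be the Euclidean motion of $\mathbb R^m$ given by $s_i=(\mathrm{diag}[1,\dots,1,(-1)^{a_{i,i+1}},\dots,(-1)^{a_{i,m}}],\ \tfrac12 e_i)$, and $s_m=(I,\tfrac12 e_m)$. $\Gamma(A)=\langle s_1,\dots,s_m\rangle$ is a torsion-free crystallographic group with extension $0\to\mathbb Z^m\to\Gamma(A)\xrightarrow{\pi}\mathbb Z_2^m\to1$, and $M(A)=\mathbb R^m/\Gamma(A)$. Identify $H^*(\mathbb Z_2^m;\mathbb F_2)=\mathbb F_2[x_1,\dots,x_m]$ ($x_i$ dual to the image of $s_i$). The $P$-matrix $P=[p_{ij}]$ has $p_{ii}=1$, $p_{ij}=2$ if $i<j$ and $a_{ij}=1$, and $p_{ij}=0$ otherwise; with $\alpha(0)=0,\alpha(1)=\alpha(2)=1,\alpha(3)=0$, $\beta(0)=\beta(2)=0,\beta(1)=\beta(3)=1$, set $\alpha_j=\sum_i\alpha(p_{ij})x_i$, $\beta_j=\sum_i\beta(p_{ij})x_i$ (so $\alpha_j+\beta_j=\sum_{i<j}a_{ij}x_i$).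 The total Stiefel–Whitney class is $w(M(A))=\pi^*\big(\prod_{j=1}^m(1+\alpha_j+\beta_j)\big)$. An RBK manifold is $M(A)$ with $m=2n$ for which $\{1,\dots,2n\}$ can be partitioned into $n$ pairs $\{j_k,j_{k+n}\}$ with equal columns $A^{j_k}=A^{j_{k+n}}$ ($A^j$ = $j$-th column of $A$). $M(A)$ has a Spin-structure iff $w_2(M(A))=0$. *)

theory Defs
  imports "HOL-Library.Poly_Mapping" "HOL-Library.Z2"
begin

(* Bott matrices: m x m strictly upper triangular 0/1 matrices, indices 1..m.
   A i j = True  means  a_ij = 1. *)
definition bott_matrix :: "nat \<Rightarrow> (nat \<Rightarrow> nat \<Rightarrow> bool) \<Rightarrow> bool" where
  "bott_matrix m A \<longleftrightarrow> (\<forall>i j. A i j \<longrightarrow> 1 \<le> i \<and> i < j \<and> j \<le> m)"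

definition col :: "(nat \<Rightarrow> nat \<Rightarrow> bool) \<Rightarrow> nat \<Rightarrow> nat \<Rightarrow> bool" where
  "col A j = (\<lambda>i. A i j)"

definition RBK :: "nat \<Rightarrow> (nat \<Rightarrow> nat \<Rightarrow> bool) \<Rightarrow> bool" where
  "RBK m A \<longleftrightarrow> bott_matrix m A \<and> even m \<and>
     (\<exists>jj :: nat \<Rightarrow> nat. bij_betw jj {1..m} {1..m} \<and>
        (\<forall>k\<in>{1..m div 2}. col A (jj k) = col A (jj (k + m div 2))))"

(* F_2[x_1, x_2, ...] = H^*(Z_2^m; F_2): monomials are exponent vectors nat \<Rightarrow>\<^sub>0 nat *)
type_synonym f2poly = "(nat \<Rightarrow>\<^sub>0 nat) \<Rightarrow>\<^sub>0 bit"

definition X :: "nat \<Rightarrow> f2poly" where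
  "X i = Poly_Mapping.single (Poly_Mapping.single i 1) 1"

definition mon_deg :: "(nat \<Rightarrow>\<^sub>0 nat) \<Rightarrow> nat" where
  "mon_deg \<mu> = (\<Sum>i\<in>Poly_Mapping.keys \<mu>. Poly_Mapping.lookup \<mu> i)"

definition hpart :: "nat \<Rightarrow> f2poly \<Rightarrow> f2poly" where
  "hpart d p = Abs_poly_mapping (\<lambda>\<mu>. Poly_Mapping.lookup p \<mu> when mon_deg \<mu> = d)"

definition Pmat :: "(nat \<Rightarrow> nat \<Rightarrow> bool) \<Rightarrow> nat \<Rightarrow> nat \<Rightarrow> nat" where
  "Pmat A i j = (if i = j then 1 else if i < j \<and> A i j then 2 else 0)"

definition alpha_fn :: "nat \<Rightarrow> bool" where
  "alpha_fn p \<longleftrightarrow> p = 1 \<or> p = 2"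

definition beta_fn :: "nat \<Rightarrow> bool" where
  "beta_fn p \<longleftrightarrow> p = 1 \<or> p = 3"

definition alpha :: "nat \<Rightarrow> (nat \<Rightarrow> nat \<Rightarrow> bool) \<Rightarrow> nat \<Rightarrow> f2poly" where
  "alpha m A j = (\<Sum>i\<in>{1..m}. if alpha_fn (Pmat A i j) then X i else 0)"

definition beta :: "nat \<Rightarrow> (nat \<Rightarrow> nat \<Rightarrow> bool) \<Rightarrow> nat \<Rightarrow> f2poly" where
  "beta m A j = (\<Sum>i\<in>{1..m}. if beta_fn (Pmat A i j) then X i else 0)"

(* total Stiefel-Whitney class in H^*(Z_2^m), before applying pi^* *)
definition sw_total_Z2m :: "nat \<Rightarrow> (nat \<Rightarrow> nat \<Rightarrow> bool) \<Rightarrow> f2poly" where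
  "sw_total_Z2m m A = (\<Prod>j\<in>{1..m}. 1 + alpha m A j + beta m A j)"

(* kernel of pi^* : H^*(Z_2^m) \<rightarrow> H^*(M(A)) = F_2[x]/(x_j^2 + x_j \<Sum>_{i<j} a_ij x_i) *)
definition bott_rel :: "nat \<Rightarrow> (nat \<Rightarrow> nat \<Rightarrow> bool) \<Rightarrow> nat \<Rightarrow> f2poly" where
  "bott_rel m A j = X j * X j + X j * (\<Sum>i\<in>{1..<j}. if A i j then X i else 0)"

definition in_ker_pi :: "nat \<Rightarrow> (nat \<Rightarrow> nat \<Rightarrow> bool) \<Rightarrow> f2poly \<Rightarrow> bool" where
  "in_ker_pi m A p \<longleftrightarrow> (\<exists>q :: nat \<Rightarrow> f2poly. p = (\<Sum>j\<in>{1..m}. q j * bott_rel m A j))"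

(* w_2(M(A)) = pi^*(degree-2 part of the product) vanishes *)
definition w2_vanishes :: "nat \<Rightarrow> (nat \<Rightarrow> nat \<Rightarrow> bool) \<Rightarrow> bool" where
  "w2_vanishes m A \<longleftrightarrow> in_ker_pi m A (hpart 2 (sw_total_Z2m m A))"

end

theory Submission
  imports Defs
begin

lemma f2_double: "(x::f2poly) + x = 0"
proof -
  have "(1::f2poly) + 1 = 0"
  proof -
    have "(1::f2poly) + 1 = Poly_Mapping.single 0 (1 + 1)"
      by (simp only: Poly_Mapping.single_add Poly_Mapping.single_one)
    also have "(1::bit) + 1 = 0" by simp
    finally show ?thesis by simp
  qed
  hence "(1+1) * x = 0" by simp
  thus ?thesis by (simp add: distrib_right)
qed

definition degP :: "(nat \<Rightarrow> bool) \<Rightarrow> f2poly \<Rightarrow> bool" where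
  "degP P p \<longleftrightarrow> (\<forall>\<mu>\<in>Poly_Mapping.keys p. P (mon_deg \<mu>))"

lemma mon_deg_add: "mon_deg (a + b) = mon_deg a + mon_deg b"
  unfolding mon_deg_def
  by (rule setsum_keys_plus_distrib) auto

lemma degP_add: assumes "degP P p" "degP P q" shows "degP P (p + q)"
  unfolding degP_def
proof
  fix \<mu> assume "\<mu> \<in> Poly_Mapping.keys (p + q)"
  hence "\<mu> \<in> Poly_Mapping.keys p \<union> Poly_Mapping.keys q" by (rule subsetD[OF keys_add])
  thus "P (mon_deg \<mu>)" using assms unfolding degP_def by (elim UnE) simp_all
qed

lemma degP_mult:
  assumes "degP P p" "degP Q q" "\<And>a b. P a \<Longrightarrow> Q b \<Longrightarrow> R (a + b)"
  shows "degP R (p * q)"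
  unfolding degP_def
proof
  fix \<mu> assume "\<mu> \<in> Poly_Mapping.keys (p * q)"
  hence "\<mu> \<in> {a + b | a b. a \<in> Poly_Mapping.keys p \<and> b \<in> Poly_Mapping.keys q}"
    by (rule subsetD[OF keys_mult])
  then obtain a b where "\<mu> = a + b" "a \<in> Poly_Mapping.keys p" "b \<in> Poly_Mapping.keys q"
    by (auto simp only: mem_Collect_eq)
  thus "R (mon_deg \<mu>)" using assms unfolding degP_def by (simp add: mon_deg_add)
qed

lemma degP_sum: assumes "\<And>i. i \<in> I \<Longrightarrow> degP P (f i)" shows "degP P (sum f I)"
  unfolding degP_def
proof
  fix \<mu> assume "\<mu> \<in> Poly_Mapping.keys (sum f I)"
  hence "\<mu> \<in> (\<Union>i\<in>I. Poly_Mapping.keys (f i))" by (rule subsetD[OF keys_sum])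
  then obtain i where "i \<in> I" "\<mu> \<in> Poly_Mapping.keys (f i)" by (elim UN_E)
  thus "P (mon_deg \<mu>)" using assms unfolding degP_def by blast
qed

lemma degP_one: "P 0 \<Longrightarrow> degP P 1"
  unfolding degP_def mon_deg_def by simp

lemma degP_X: "degP (\<lambda>d. d = 1) (X i)"
  unfolding degP_def X_def mon_deg_def by simp

lemma degP_zero: "degP P 0"
  unfolding degP_def by simp

lemma degP_pow4: "degP (\<lambda>d. 4 dvd d) p \<Longrightarrow> degP (\<lambda>d. 4 dvd d) (p ^ n)"
  by (induction n) (auto intro!: degP_one degP_mult)

lemma hpart2_zero: "degP (\<lambda>d. 4 dvd d) p \<Longrightarrow> hpart 2 p = 0"
proof -
  assume h: "degP (\<lambda>d. 4 dvd d) p"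
  have "(\<lambda>\<mu>. Poly_Mapping.lookup p \<mu> when mon_deg \<mu> = 2) = (\<lambda>_. 0)"
  proof
    fix \<mu>
    show "(Poly_Mapping.lookup p \<mu> when mon_deg \<mu> = 2) = 0"
    proof (cases "\<mu> \<in> Poly_Mapping.keys p")
      case True
      then have "4 dvd mon_deg \<mu>" using h unfolding degP_def by blast
      then have "mon_deg \<mu> \<noteq> 2" by auto
      then show ?thesis by simp
    next
      case False
      then show ?thesis by (simp add: in_keys_iff)
    qed
  qed
  thus ?thesis unfolding hpart_def by simp
qed

theorem lemma3p2:
  fixes m k :: nat and A :: "nat \<Rightarrow> nat \<Rightarrow> bool" and idx :: "nat \<Rightarrow> nat"
  assumes "RBK m A"
    and "even k"
    and "strict_mono_on {1..2*k} idx"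
    and "idx ` {1..2*k} \<subseteq> {1..m}"
    and "\<forall>s\<in>{1..2*k}. \<forall>t\<in>{1..2*k}. col A (idx s) = col A (idx t)"
    and "\<forall>s\<in>{1..2*k}. col A (idx s) \<noteq> (\<lambda>_. False)"
    and "\<forall>j\<in>{1..m} - idx ` {1..2*k}. col A j = (\<lambda>_. False)"
  shows "w2_vanishes m A"
proof -
  have bm: "bott_matrix m A" using assms(1) unfolding RBK_def by blast
  define S where "S j = (\<Sum>i\<in>{1..m}. if A i j then X i else 0)" for j
  have ab: "alpha m A j + beta m A j = S j" for j
  proof -
    have "alpha m A j + beta m A j = (\<Sum>i\<in>{1..m}. (if alpha_fn (Pmat A i j) then X i else 0)
        + (if beta_fn (Pmat A i j) then X i else 0))"
      unfolding alpha_def beta_def by (simp add: sum.distrib)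
    also have "\<dots> = S j" unfolding S_def
    proof (rule sum.cong)
      fix i assume "i \<in> {1..m}"
      show "(if alpha_fn (Pmat A i j) then X i else 0) + (if beta_fn (Pmat A i j) then X i else 0)
          = (if A i j then X i else 0)"
        using bm unfolding Pmat_def alpha_fn_def beta_fn_def bott_matrix_def
        by (auto simp: f2_double)
    qed simp
    finally show ?thesis .
  qed
  define I where "I = idx ` {1..2*k}"
  define L where "L = S (idx 1)"
  have SI: "S j = L" if "j \<in> I" for j
  proof -
    from that obtain s where s: "s \<in> {1..2*k}" "j = idx s" unfolding I_def by blast
    hence one: "1 \<in> {1..2*k}" by auto
    have "col A j = col A (idx 1)" using assms(5) s one by blast
    hence "\<And>i. A i j = A i (idx 1)" unfolding col_def by metis
    thus ?thesis unfolding S_def L_def by simp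
  qed
  have S0: "S j = 0" if "j \<in> {1..m} - I" for j
  proof -
    have "col A j = (\<lambda>_. False)" using assms(7) that unfolding I_def by blast
    hence "\<And>i. \<not> A i j" unfolding col_def by metis
    thus ?thesis unfolding S_def by simp
  qed
  have inj: "inj_on idx {1..2*k}"
    using assms(3) strict_mono_on_imp_inj_on by blast
  have cardI: "card I = 2*k" unfolding I_def using card_image[OF inj] by simp
  have "sw_total_Z2m m A = (\<Prod>j\<in>{1..m}. 1 + S j)"
    unfolding sw_total_Z2m_def by (simp add: ab add.assoc)
  also have "\<dots> = (\<Prod>j\<in>I. 1 + S j)"
    using assms(4) S0 unfolding I_def
    by (intro prod.mono_neutral_right) auto
  also have "\<dots> = (\<Prod>j\<in>I. 1 + L)" using SI by simp
  also have "\<dots> = (1 + L) ^ (2*k)" using cardI by simp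
  also have "\<dots> = ((1 + L)^4) ^ (k div 2)"
  proof -
    have "2*k = 4*(k div 2)" using assms(2) by auto
    thus ?thesis by (simp only: power_mult)
  qed
  finally have sw: "sw_total_Z2m m A = ((1 + L)^4) ^ (k div 2)" .
  have sq: "(1 + y)^2 = 1 + y^2" for y :: f2poly
  proof -
    have "(1 + y)^2 = 1 + y^2 + (y + y)" by (simp add: power2_eq_square algebra_simps)
    thus ?thesis by (simp add: f2_double)
  qed
  have p4: "(1 + L)^4 = 1 + (L^2)^2"
  proof -
    have "(1 + L)^4 = ((1 + L)^2)^2" by (simp flip: power_mult)
    thus ?thesis by (simp add: sq)
  qed
  have dL: "degP (\<lambda>d. d = 1) L" unfolding L_def S_def
  proof (rule degP_sum)
    fix i
    show "degP (\<lambda>d. d = 1) (if A i (idx 1) then X i else 0)"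
      by (cases "A i (idx 1)") (simp_all only: if_True if_False degP_X degP_zero)
  qed
  have dL2: "degP (\<lambda>d. d = 2) (L^2)" unfolding power2_eq_square
    by (rule degP_mult[OF dL dL]) auto
  have dL4: "degP (\<lambda>d. 4 dvd d) ((L^2)^2)" unfolding power2_eq_square[of "L^2"]
    by (rule degP_mult[OF dL2 dL2]) auto
  have d: "degP (\<lambda>d. 4 dvd d) ((1 + L)^4)" unfolding p4
    by (intro degP_add degP_one dL4) auto
  have "hpart 2 (sw_total_Z2m m A) = 0"
    unfolding sw by (intro hpart2_zero degP_pow4 d)
  thus ?thesis unfolding w2_vanishes_def in_ker_pi_def
    by (intro exI[of _ "\<lambda>_. 0"]) simp
qed

end
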